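(* Let $\boldsymbol{R}=[r_{ij}]\in\mathbb{C}^{N\times N}$ be Hermitian and $2N$-dominant, i.e. $r_{ii}\ge 2N\sum_{j\ne i}|r_{ij}|$ for all $i$. Define $\delta_1=0$ and $\delta_k=\sum_{i=1}^{k-1}|r_{ki}|$ for $k=2,\ldots,N$; define $a_k=2\delta_k+4\sum_{i=1}^{N-k}\delta_{k+i}$ for $k=1,\ldots,N-1$ and $a_N=2\delta_N$; and let $\overline{\boldsymbol{R}}=\boldsymbol{R}-\mathrm{Diag}(\boldsymbol{R})+\mathrm{diag}(a_1,\ldots,a_N)$. Let $\boldsymbol{g}\in\Omega^N$ be the output of the greedy method: $\boldsymbol{g}(1)=1$ and, for $k=1,\ldots,N-1$, $\boldsymbol{g}(k+1)$ is a maximizer over $x\in\Omega$ of $[\boldsymbol{g}(1),\ldots,\boldsymbol{g}(k),x]^H\boldsymbol{R}_{k+1}[\boldsymbol{g}(1),\ldots,\boldsymbol{g}(k),x]$. Then $\mathrm{Tr}(\overline{\boldsymbol{R}})\le\mathrm{Tr}(\boldsymbol{R})$ and \[ \boldsymbol{g}^H\boldsymbol{R}\boldsymbol{g}\ \ge\ \Big(1-\frac{1}{e}+\frac{1}{e}\cdot\frac{1}{2N+1}\Big)\max_{\boldsymbol{s}\in\Omega^N}\boldsymbol{s}^H\boldsymbol{R}\boldsymbol{s}. \]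
   Context: $\Omega=\{x\in\mathbb{C}:|x|=1\}$. $\boldsymbol{R}_m$ denotes the principal submatrix of $\boldsymbol{R}$ formed by its first $m$ rows and first $m$ columns, and $[c_1,\ldots,c_m]$ denotes the column vector with entries $c_1,\ldots,c_m$. A square matrix $[r_{ij}]_{N\times N}$ is $M$-dominant if $r_{ii}\ge M\sum_{j=1,j\ne i}^N|r_{ij}|$ for all $i$. $\mathrm{Diag}(\boldsymbol{R})$ is the diagonal matrix with the diagonal of $\boldsymbol{R}$; $\mathrm{diag}(a_1,\ldots,a_N)$ is the diagonal matrix with entries $a_1,\ldots,a_N$. $\mathrm{Tr}$ is the trace. Empty sums are zero. *)

theory Defs
  imports "HOL-Analysis.Analysis"
begin

text \<open>Matrices/vectors of size N are functions on nat indexed by 1..N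
  (entries outside {1..N} are irrelevant).\<close>

definition Omega :: "complex set" where
  "Omega = {x. cmod x = 1}"

definition hermitian :: "nat \<Rightarrow> (nat \<Rightarrow> nat \<Rightarrow> complex) \<Rightarrow> bool" where
  "hermitian N R \<longleftrightarrow> (\<forall>i\<in>{1..N}. \<forall>j\<in>{1..N}. R i j = cnj (R j i))"

text \<open>M-dominant: r_ii >= M * sum_{j /= i} |r_ij| (r_ii is real for Hermitian R;
  the comparison is on its real part).\<close>
definition dominant :: "real \<Rightarrow> nat \<Rightarrow> (nat \<Rightarrow> nat \<Rightarrow> complex) \<Rightarrow> bool" where
  "dominant M N R \<longleftrightarrow>
     (\<forall>i\<in>{1..N}. Re (R i i) \<ge> M * (\<Sum>j\<in>{1..N}-{i}. cmod (R i j)))"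

definition quad_form :: "nat \<Rightarrow> (nat \<Rightarrow> nat \<Rightarrow> complex) \<Rightarrow> (nat \<Rightarrow> complex) \<Rightarrow> complex" where
  "quad_form m R s = (\<Sum>i=1..m. \<Sum>j=1..m. cnj (s i) * R i j * s j)"

definition delta :: "(nat \<Rightarrow> nat \<Rightarrow> complex) \<Rightarrow> nat \<Rightarrow> real" where
  "delta R k = (\<Sum>i=1..k-1. cmod (R k i))"

definition a_coef :: "nat \<Rightarrow> (nat \<Rightarrow> nat \<Rightarrow> complex) \<Rightarrow> nat \<Rightarrow> real" where
  "a_coef N R k = 2 * delta R k + 4 * (\<Sum>i=1..N-k. delta R (k+i))"

definition Rbar :: "nat \<Rightarrow> (nat \<Rightarrow> nat \<Rightarrow> complex) \<Rightarrow> nat \<Rightarrow> nat \<Rightarrow> complex" where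
  "Rbar N R i j = R i j - (if i = j then R i i else 0) + (if i = j then complex_of_real (a_coef N R i) else 0)"

definition mtrace :: "nat \<Rightarrow> (nat \<Rightarrow> nat \<Rightarrow> complex) \<Rightarrow> complex" where
  "mtrace N R = (\<Sum>i=1..N. R i i)"

definition greedy_output :: "nat \<Rightarrow> (nat \<Rightarrow> nat \<Rightarrow> complex) \<Rightarrow> (nat \<Rightarrow> complex) \<Rightarrow> bool" where
  "greedy_output N R g \<longleftrightarrow> g 1 = 1 \<and>
     (\<forall>k\<in>{1..N-1}. g (k+1) \<in> Omega \<and>
        (\<forall>x\<in>Omega. Re (quad_form (k+1) R (g(k+1 := x))) \<le> Re (quad_form (k+1) R g)))"

end

theory Submission
  imports Defs
begin

lemma qf_split:
  "quad_form N R s = (\<Sum>i=1..N. cnj (s i) * R i i * s i)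
     + (\<Sum>i=1..N. \<Sum>j\<in>{1..N}-{i}. cnj (s i) * R i j * s j)"
  unfolding quad_form_def sum.distrib[symmetric]
  by (rule sum.cong) (auto simp: sum.remove)

lemma qf_bound:
  assumes "\<forall>i\<in>{1..N}. cmod (s i) = 1"
  shows "\<bar>Re (quad_form N R s) - (\<Sum>i=1..N. Re (R i i))\<bar>
     \<le> (\<Sum>i=1..N. \<Sum>j\<in>{1..N}-{i}. cmod (R i j))"
proof -
  have d: "(\<Sum>i=1..N. cnj (s i) * R i i * s i) = (\<Sum>i=1..N. R i i)"
  proof (rule sum.cong)
    fix i assume "i \<in> {1..N}"
    then have "cmod (s i) = 1" using assms by auto
    then have "s i * cnj (s i) = 1" using complex_norm_square[of "s i"] by simp
    then show "cnj (s i) * R i i * s i = R i i" by (simp add: algebra_simps)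
  qed simp
  have o: "cmod (\<Sum>i=1..N. \<Sum>j\<in>{1..N}-{i}. cnj (s i) * R i j * s j)
      \<le> (\<Sum>i=1..N. \<Sum>j\<in>{1..N}-{i}. cmod (R i j))"
  proof -
    have "cmod (\<Sum>i=1..N. \<Sum>j\<in>{1..N}-{i}. cnj (s i) * R i j * s j)
       \<le> (\<Sum>i=1..N. \<Sum>j\<in>{1..N}-{i}. cmod (cnj (s i) * R i j * s j))"
      by (rule order_trans[OF norm_sum sum_mono]) (rule norm_sum)
    also have "\<dots> = (\<Sum>i=1..N. \<Sum>j\<in>{1..N}-{i}. cmod (R i j))"
      using assms by (intro sum.cong refl) (auto simp: norm_mult)
    finally show ?thesis .
  qed
  have "Re (quad_form N R s) - (\<Sum>i=1..N. Re (R i i))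
      = Re (\<Sum>i=1..N. \<Sum>j\<in>{1..N}-{i}. cnj (s i) * R i j * s j)"
    unfolding qf_split d by (simp add: Re_sum)
  moreover have "\<bar>Re (\<Sum>i=1..N. \<Sum>j\<in>{1..N}-{i}. cnj (s i) * R i j * s j)\<bar>
      \<le> cmod (\<Sum>i=1..N. \<Sum>j\<in>{1..N}-{i}. cnj (s i) * R i j * s j)"
    by (rule abs_Re_le_cmod)
  ultimately show ?thesis using o by linarith
qed

lemma qf_scale: "quad_form m R (\<lambda>i. c * s i) = cnj c * c * quad_form m R s"
  unfolding quad_form_def by (simp add: sum_distrib_left algebra_simps)

lemma qf_cong: "(\<And>i. i \<in> {1..m} \<Longrightarrow> s i = t i) \<Longrightarrow> quad_form m R s = quad_form m R t"
  unfolding quad_form_def by (intro sum.cong refl) auto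

theorem proposition2:
  fixes N :: nat and R :: "nat \<Rightarrow> nat \<Rightarrow> complex" and g :: "nat \<Rightarrow> complex"
  assumes "N \<ge> 1"
    and "hermitian N R"
    and "dominant (2 * real N) N R"
    and "greedy_output N R g"
  shows "Re (mtrace N (Rbar N R)) \<le> Re (mtrace N R)
    \<and> Re (quad_form N R g) \<ge>
        (1 - 1 / exp 1 + (1 / exp 1) * (1 / (2 * real N + 1)))
        * (SUP s\<in>{s. \<forall>i\<in>{1..N}. s i \<in> Omega}. Re (quad_form N R s))"
proof -
  define D where "D = (\<Sum>i=1..N. Re (R i i))"
  define Off where "Off = (\<Sum>i=1..N. \<Sum>j\<in>{1..N}-{i}. cmod (R i j))"
  define c where "c = 1 - 1 / exp 1 + (1 / exp 1) * (1 / (2 * real N + 1))"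
  have Off0: "Off \<ge> 0" unfolding Off_def by (intro sum_nonneg) auto
  have DO: "D \<ge> 2 * real N * Off"
  proof -
    have "2 * real N * Off = (\<Sum>i=1..N. 2 * real N * (\<Sum>j\<in>{1..N}-{i}. cmod (R i j)))"
      unfolding Off_def by (rule sum_distrib_left)
    also have "\<dots> \<le> D" unfolding D_def
      using assms(3) unfolding dominant_def by (intro sum_mono) auto
    finally show ?thesis .
  qed
  have gO: "\<forall>i\<in>{1..N}. cmod (g i) = 1"
  proof
    fix i assume i: "i \<in> {1..N}"
    show "cmod (g i) = 1"
    proof (cases "i = 1")
      case True then show ?thesis using assms(4) by (simp add: greedy_output_def)
    next
      case False
      then have "i - 1 \<in> {1..N-1}" "i - 1 + 1 = i" using i by auto
      then show ?thesis using assms(4) unfolding greedy_output_def Omega_def by force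
    qed
  qed
  let ?S = "{s. \<forall>i\<in>{1..N}. s i \<in> Omega}"
  have Sne: "?S \<noteq> {}" 
  proof -
    have "(\<lambda>_. 1) \<in> ?S" by (simp add: Omega_def)
    then show ?thesis by (metis empty_iff)
  qed
  have gl: "Re (quad_form N R g) \<ge> D - Off"
    using qf_bound[OF gO, of R] unfolding D_def Off_def by linarith
  have sb: "Re (quad_form N R s) \<le> D + Off" if "s \<in> ?S" for s
    using qf_bound[of N s R] that unfolding D_def Off_def Omega_def by auto
  have e3: "exp 1 \<le> (3::real)" by (rule exp_le)
  have e1: "1 \<le> exp (1::real)" by simp
  define u where "u = 1 / exp (1::real)"
  have u0: "0 < u" "u \<le> 1" "1/3 \<le> u" using e3 e1 unfolding u_def by (auto simp: field_simps)
  have cu: "c = 1 - u + u * (1 / (2 * real N + 1))" unfolding c_def u_def by simp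
  have Nd: "0 < 2 * real N + 1" by simp
  have c01: "0 \<le> c" "c \<le> 1"
  proof -
    have "0 \<le> u * (1 / (2 * real N + 1))" using u0 by simp
    then show "0 \<le> c" using u0 cu by linarith
    have "u * (1 / (2 * real N + 1)) \<le> u * 1"
      using u0 Nd by (intro mult_left_mono) auto
    then show "c \<le> 1" using cu by linarith
  qed
  have bdd: "bdd_above ((\<lambda>s. Re (quad_form N R s)) ` ?S)"
    using sb by (intro bdd_aboveI2) auto
  have part2: "Re (quad_form N R g) \<ge> c * (SUP s\<in>?S. Re (quad_form N R s))"
  proof (cases "N = 2")
    case True
    have le: "Re (quad_form N R s) \<le> Re (quad_form N R g)" if s: "s \<in> ?S" for s
    proof -
      have s1: "cmod (s 1) = 1" "cmod (s 2) = 1" using s True unfolding Omega_def by auto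
      define t where "t = (\<lambda>i. cnj (s 1) * s i)"
      have "s 1 * cnj (s 1) = 1" using complex_norm_square[of "s 1"] s1 by simp
      then have t1: "t 1 = 1" unfolding t_def by (simp add: mult.commute)
      have t2: "t 2 \<in> Omega" using s1 unfolding t_def Omega_def by (simp add: norm_mult)
      have "quad_form N R t = cnj (cnj (s 1)) * cnj (s 1) * quad_form N R s"
        unfolding t_def by (rule qf_scale)
      also have "cnj (cnj (s 1)) * cnj (s 1) = 1"
        using \<open>s 1 * cnj (s 1) = 1\<close> by simp
      finally have qt: "quad_form N R t = quad_form N R s" by simp
      have "quad_form N R t = quad_form 2 R (g(2 := t 2))"
        unfolding True
      proof (rule qf_cong)
        fix i :: nat assume "i \<in> {1..2}"
        then have "i = 1 \<or> i = 2" by auto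
        then show "t i = (g(2 := t 2)) i" using t1 assms(4) unfolding greedy_output_def by auto
      qed
      moreover have "Re (quad_form 2 R (g(2 := t 2))) \<le> Re (quad_form 2 R g)"
      proof -
        have k1: "(1::nat) \<in> {1..N-1}" using True by simp
        have "\<forall>x\<in>Omega. Re (quad_form (1+1) R (g(1+1 := x))) \<le> Re (quad_form (1+1) R g)"
          using assms(4) k1 unfolding greedy_output_def by blast
        then show ?thesis using t2 unfolding one_add_one by blast
      qed
      ultimately show ?thesis using qt True by simp
    qed
    have "(SUP s\<in>?S. Re (quad_form N R s)) \<le> Re (quad_form N R g)"
      using Sne le by (intro cSUP_least) auto
    then have "c * (SUP s\<in>?S. Re (quad_form N R s)) \<le> c * Re (quad_form N R g)"
      using c01 by (intro mult_left_mono) auto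
    also have "\<dots> \<le> Re (quad_form N R g)"
    proof -
      have "0 \<le> D - Off" using DO Off0 True by simp
      then show ?thesis using gl c01 by (simp add: mult_left_le_one_le)
    qed
    finally show ?thesis .
  next
    case False
    have "(SUP s\<in>?S. Re (quad_form N R s)) \<le> D + Off"
      using Sne sb by (intro cSUP_least) auto
    then have "c * (SUP s\<in>?S. Re (quad_form N R s)) \<le> c * (D + Off)"
      using c01 by (intro mult_left_mono) auto
    also have "c * (D + Off) \<le> D - Off"
    proof (cases "N = 1")
      case True
      then have "Off = 0" unfolding Off_def by simp
      moreover have "0 \<le> D" using DO Off0 by (metis calculation mult_zero_right)
      ultimately show ?thesis using c01 by (simp add: mult_left_le_one_le)
    next
      case N1: False
      then have N3: "3 \<le> real N" using False assms(1) by auto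
      have "D - Off - c * (D + Off) = u * (1 - 1 / (2 * real N + 1)) * (D + Off) - 2 * Off"
        unfolding cu by (simp add: algebra_simps)
      also have "u * (1 - 1 / (2 * real N + 1)) = u * (2 * real N) / (2 * real N + 1)"
        using Nd by (simp add: field_simps)
      also have "u * (2 * real N) / (2 * real N + 1) * (D + Off) \<ge> u * (2 * real N) * Off"
      proof -
        have "(2 * real N + 1) * Off \<le> D + Off" using DO by (simp add: algebra_simps)
        then have "Off \<le> (D + Off) / (2 * real N + 1)" using Nd by (simp add: field_simps)
        then have "u * (2 * real N) * Off \<le> u * (2 * real N) * ((D + Off) / (2 * real N + 1))"
          using u0 by (intro mult_left_mono) auto
        then show ?thesis by simp
      qed
      moreover have "u * (2 * real N) * Off \<ge> 2 * Off"
      proof -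
        have "(1/3) * 3 \<le> u * real N" using u0 N3 by (intro mult_mono) auto
        then have "1 \<le> u * real N" by simp
        then have "1 * (2 * Off) \<le> (u * real N) * (2 * Off)" using Off0 by (intro mult_right_mono) auto
        then show ?thesis by (simp add: algebra_simps)
      qed
      ultimately show ?thesis by linarith
    qed
    also have "\<dots> \<le> Re (quad_form N R g)" using gl .
    finally show ?thesis .
  qed
  have part1: "Re (mtrace N (Rbar N R)) \<le> Re (mtrace N R)"
  proof -
    define Dl where "Dl = (\<Sum>k=1..N. delta R k)"
    have dnn: "\<And>k. 0 \<le> delta R k" unfolding delta_def by (intro sum_nonneg) auto
    have inner: "(\<Sum>i=1..N-k. delta R (k+i)) \<le> Dl" for k
    proof -
      have "(\<Sum>i=1..N-k. delta R (k+i)) = sum (delta R) ((\<lambda>i. k+i) ` {1..N-k})"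
        by (subst sum.reindex) auto
      also have "\<dots> \<le> Dl" unfolding Dl_def
        by (intro sum_mono2) (auto simp: dnn)
      finally show ?thesis .
    qed
    have "(\<Sum>k=1..N. (\<Sum>i=1..N-k. delta R (k+i)))
        = (\<Sum>k=1..N-1. (\<Sum>i=1..N-k. delta R (k+i))) + (\<Sum>i=1..N-N. delta R (N+i))"
    proof -
      have "{1..N} = insert N {1..N-1}" using assms(1) by auto
      moreover have "N \<notin> {1..N-1}" using assms(1) by auto
      ultimately show ?thesis by (simp add: add.commute)
    qed
    also have "\<dots> \<le> (\<Sum>k=1..N-1. Dl) + 0" by (intro add_mono sum_mono inner) auto
    finally have S1: "(\<Sum>k=1..N. (\<Sum>i=1..N-k. delta R (k+i))) \<le> (real N - 1) * Dl"
      using assms(1) by (simp add: of_nat_diff)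
    have A: "(\<Sum>k=1..N. a_coef N R k) \<le> (4 * real N - 2) * Dl"
    proof -
      have "(\<Sum>k=1..N. a_coef N R k) = 2 * Dl + 4 * (\<Sum>k=1..N. (\<Sum>i=1..N-k. delta R (k+i)))"
        unfolding a_coef_def Dl_def by (simp add: sum.distrib sum_distrib_left)
      then show ?thesis using S1 by (simp add: algebra_simps)
    qed
    have setl: "{1..x-1} = {i \<in> {1..N}. i < x}" if x: "x \<in> {1..N}" for x
    proof (rule set_eqI)
      fix i show "i \<in> {1..x-1} \<longleftrightarrow> i \<in> {i \<in> {1..N}. i < x}" using x by simp arith
    qed
    have low: "Dl = (\<Sum>k=1..N. \<Sum>i\<in>{i\<in>{1..N}. i < k}. cmod (R k i))"
      unfolding Dl_def delta_def
      by (intro sum.cong refl) (erule setl)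
    also have "\<dots> = (\<Sum>i=1..N. \<Sum>k\<in>{k\<in>{1..N}. i < k}. cmod (R k i))"
      by (rule sum.swap_restrict[of "{1..N}" "{1..N}" "\<lambda>k i. cmod (R k i)" "\<lambda>k i. i < k"]) simp_all
    also have "\<dots> = (\<Sum>i=1..N. \<Sum>k\<in>{k\<in>{1..N}. i < k}. cmod (R i k))"
    proof (intro sum.cong refl)
      fix i k assume i: "i \<in> {1..N}" and k: "k \<in> {k \<in> {1..N}. i < k}"
      then have "R k i = cnj (R i k)" using assms(2) unfolding hermitian_def by blast
      then show "cmod (R k i) = cmod (R i k)" by (simp only: complex_mod_cnj)
    qed
    finally have up: "Dl = (\<Sum>i=1..N. \<Sum>k\<in>{k\<in>{1..N}. i < k}. cmod (R i k))" .
    have "Off = (\<Sum>i=1..N. (\<Sum>k\<in>{k\<in>{1..N}. k < i}. cmod (R i k)) + (\<Sum>k\<in>{k\<in>{1..N}. i < k}. cmod (R i k)))"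
      unfolding Off_def
    proof (intro sum.cong refl)
      fix i
      have "{1..N} - {i} = {k\<in>{1..N}. k < i} \<union> {k\<in>{1..N}. i < k}" by auto
      then show "(\<Sum>j\<in>{1..N}-{i}. cmod (R i j)) = (\<Sum>k\<in>{k\<in>{1..N}. k < i}. cmod (R i k)) + (\<Sum>k\<in>{k\<in>{1..N}. i < k}. cmod (R i k))"
        by (simp add: sum.union_disjoint[symmetric] disjoint_iff)
    qed
    then have OD: "Off = 2 * Dl" using low up by (simp add: sum.distrib)
    have Dl0: "0 \<le> Dl" unfolding Dl_def by (intro sum_nonneg dnn)
    have "(4 * real N - 2) * Dl \<le> (4 * real N) * Dl" using Dl0 by (intro mult_right_mono) auto
    moreover have "2 * real N * Off = 4 * real N * Dl" using OD by simp
    ultimately have "(\<Sum>k=1..N. a_coef N R k) \<le> D"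
      using A DO by linarith
    moreover have "Re (mtrace N (Rbar N R)) = (\<Sum>k=1..N. a_coef N R k)"
      unfolding mtrace_def Rbar_def by (simp add: Re_sum)
    moreover have "Re (mtrace N R) = D" unfolding mtrace_def D_def by (simp add: Re_sum)
    ultimately show ?thesis by simp
  qed
  show ?thesis using part1 part2 unfolding c_def by blast
qed

end
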